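(* Let $I\subseteq\mathbb K[x_1,\dots,x_n]$ be an $\mathfrak m$-primary monomial ideal with $\mu_i=x_i^{d_i}\in G(I)$, and let $J=\langle\mu_1,\dots,\mu_n\rangle$. Then $I$ is very good if and only if $I^2=IJ$.
   Context: Let $\mathbb K$ be a field, $R=\mathbb K[x_1,\dots,x_n]$, $\mathfrak m=\langle x_1,\dots,x_n\rangle$, $\mathbb N=\{0,1,2,\dots\}$. A monomial $x_1^{\alpha_1}\cdots x_n^{\alpha_n}$ is identified with the point $(\alpha_1,\dots,\alpha_n)\in\mathbb N^n$. For a monomial ideal $I$, $G(I)$ denotes its (unique) minimal monomial generating set. If $I$ is an $\mathfrak m$-primary monomial ideal, then for each $i$ there is a unique $d_i\ge1$ with $x_i^{d_i}\in G(I)$; write $\mu_i=x_i^{d_i}$. For $(a_1,\dots,a_n)\in\mathbb N^n$ the box associated to $I$ is $B_{a_1,\dots,a_n}=([a_1d_1,(a_1+1)d_1]\times\cdots\times[a_nd_n,(a_n+1)d_n])\cap\mathbb N^n$; a monomial belongs to a box if its exponent vector does. An $\mathfrak m$-primary monomial ideal $I$ is called good if for every integer $l\ge1$, every element of $G(I^l)$ belongs to some box $B_{a_1,\dots,a_n}$ with $a_1+\dots+a_n=l-1$. For a good ideal $I$ and $a=(a_1,\dots,a_n)\in\mathbb N^n$, with $l=a_1+\dots+a_n+1$, define $I_{a_1,\dots,a_n}=\left\langle \frac{m}{\mu_1^{a_1}\cdots\mu_n^{a_n}} : m\in B_{a_1,\dots,a_n}\cap G(I^l)\right\rangle$. A good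 ideal $I$ is called very good if $I_{a}=I$ for all $a\in\mathbb N^n$. *)

theory Defs
  imports Main
begin

text \<open>Monomials of K[x_1,...,x_n] are encoded by exponent vectors
  a :: nat => nat with a i = 0 for i >= n (variable x_(i+1) has index i).
  A monomial ideal is encoded by the set of exponent vectors of the monomials
  it contains (which determines it). Divisibility of monomials is the
  pointwise order on exponent vectors.\<close>

definition mons :: "nat \<Rightarrow> (nat \<Rightarrow> nat) set" where
  "mons n = {a. \<forall>i. n \<le> i \<longrightarrow> a i = 0}"

definition mono_ideal :: "nat \<Rightarrow> (nat \<Rightarrow> nat) set \<Rightarrow> bool" where
  "mono_ideal n I \<longleftrightarrow> I \<subseteq> mons n \<and>
     (\<forall>a\<in>I. \<forall>b\<in>mons n. a \<le> b \<longrightarrow> b \<in> I)"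

definition gen_ideal :: "nat \<Rightarrow> (nat \<Rightarrow> nat) set \<Rightarrow> (nat \<Rightarrow> nat) set" where
  "gen_ideal n G = {c \<in> mons n. \<exists>g\<in>G. g \<le> c}"

definition gens :: "(nat \<Rightarrow> nat) set \<Rightarrow> (nat \<Rightarrow> nat) set" where
  "gens I = {a \<in> I. \<forall>b\<in>I. b \<le> a \<longrightarrow> b = a}"

definition prod_ideal :: "nat \<Rightarrow> (nat \<Rightarrow> nat) set \<Rightarrow> (nat \<Rightarrow> nat) set \<Rightarrow> (nat \<Rightarrow> nat) set" where
  "prod_ideal n I J = gen_ideal n {(\<lambda>i. a i + b i) | a b. a \<in> I \<and> b \<in> J}"

primrec ipow :: "nat \<Rightarrow> (nat \<Rightarrow> nat) set \<Rightarrow> nat \<Rightarrow> (nat \<Rightarrow> nat) set" where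
  "ipow n I 0 = mons n"
| "ipow n I (Suc l) = prod_ideal n I (ipow n I l)"

definition rad :: "nat \<Rightarrow> (nat \<Rightarrow> nat) set \<Rightarrow> (nat \<Rightarrow> nat) set" where
  "rad n I = {a \<in> mons n. \<exists>k\<ge>1. (\<lambda>i. k * a i) \<in> I}"

definition max_ideal :: "nat \<Rightarrow> (nat \<Rightarrow> nat) set" where
  "max_ideal n = gen_ideal n {(\<lambda>j. if j = i then 1 else 0) | i. i < n}"

definition m_primary :: "nat \<Rightarrow> (nat \<Rightarrow> nat) set \<Rightarrow> bool" where
  "m_primary n I \<longleftrightarrow> mono_ideal n I \<and> rad n I = max_ideal n"

definition xpow :: "nat \<Rightarrow> nat \<Rightarrow> (nat \<Rightarrow> nat)" where
  "xpow i d = (\<lambda>j. if j = i then d else 0)"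

definition dI :: "(nat \<Rightarrow> nat) set \<Rightarrow> nat \<Rightarrow> nat" where
  "dI I i = (THE d. 1 \<le> d \<and> xpow i d \<in> gens I)"

definition box :: "nat \<Rightarrow> (nat \<Rightarrow> nat) set \<Rightarrow> (nat \<Rightarrow> nat) \<Rightarrow> (nat \<Rightarrow> nat) set" where
  "box n I a = {b \<in> mons n. \<forall>i<n. a i * dI I i \<le> b i \<and> b i \<le> (a i + 1) * dI I i}"

definition good :: "nat \<Rightarrow> (nat \<Rightarrow> nat) set \<Rightarrow> bool" where
  "good n I \<longleftrightarrow> m_primary n I \<and>
     (\<forall>l\<ge>1. \<forall>m\<in>gens (ipow n I l).
        \<exists>a\<in>mons n. (\<Sum>i<n. a i) = l - 1 \<and> m \<in> box n I a)"

definition sub_ideal :: "nat \<Rightarrow> (nat \<Rightarrow> nat) set \<Rightarrow> (nat \<Rightarrow> nat) \<Rightarrow> (nat \<Rightarrow> nat) set" where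
  "sub_ideal n I a = gen_ideal n
     {(\<lambda>i. m i - a i * dI I i) | m. m \<in> box n I a \<inter> gens (ipow n I ((\<Sum>i<n. a i) + 1))}"

definition very_good :: "nat \<Rightarrow> (nat \<Rightarrow> nat) set \<Rightarrow> bool" where
  "very_good n I \<longleftrightarrow> good n I \<and> (\<forall>a\<in>mons n. sub_ideal n I a = I)"

end

theory Submission
  imports Defs
begin


lemma mem_gen: "c \<in> gen_ideal n G \<longleftrightarrow> c \<in> mons n \<and> (\<exists>g\<in>G. g \<le> c)"
  by (simp add: gen_ideal_def)

lemma mem_prod: "c \<in> prod_ideal n A B \<longleftrightarrow> c \<in> mons n \<and> (\<exists>a\<in>A. \<exists>b\<in>B. \<forall>i. a i + b i \<le> c i)"
  by (auto simp: prod_ideal_def gen_ideal_def le_fun_def)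

lemma mons_sum_less:
  assumes "b \<in> mons n" "c \<in> mons n" "b \<le> c" "b \<noteq> c"
  shows "(\<Sum>i<n. b i) < (\<Sum>i<n. c i)"
proof -
  obtain i where i: "b i \<noteq> c i" using assms(4) by auto
  have "i < n"
  proof (rule ccontr)
    assume "\<not> i < n" hence "b i = 0" "c i = 0" using assms(1,2) by (auto simp: mons_def)
    with i show False by simp
  qed
  have "b i < c i" using i assms(3) by (auto simp: le_fun_def dest: spec[of _ i])
  show ?thesis
    apply (rule sum_strict_mono_ex1)
    using assms(3) \<open>b i < c i\<close> \<open>i < n\<close> by (auto simp: le_fun_def)
qed

lemma wf_gens:
  assumes "S \<subseteq> mons n" "c \<in> S" shows "\<exists>g\<in>gens S. g \<le> c"
  using assms(2)
proof (induction "(\<Sum>i<n. c i)" arbitrary: c rule: less_induct)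
  case less
  show ?case
  proof (cases "c \<in> gens S")
    case True thus ?thesis by auto
  next
    case False
    then obtain b where b: "b \<in> S" "b \<le> c" "b \<noteq> c" using less.prems by (auto simp: gens_def)
    have "(\<Sum>i<n. b i) < (\<Sum>i<n. c i)" using mons_sum_less[of b n c] b less.prems assms(1) by blast
    from less.hyps[OF this b(1)] obtain g where "g \<in> gens S" "g \<le> b" by blast
    hence "g \<le> c" using b(2) by (meson order_trans)
    thus ?thesis using \<open>g \<in> gens S\<close> by blast
  qed
qed

lemma sum_gt_ex:
  fixes f g :: "nat \<Rightarrow> nat"
  assumes "(\<Sum>i<n. f i) < (\<Sum>i<n. g i)" shows "\<exists>i<n. f i < g i"
proof (rule ccontr)
  assume "\<not> ?thesis"
  hence "\<forall>i\<in>{..<n}. g i \<le> f i" by auto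
  hence "(\<Sum>i<n. g i) \<le> (\<Sum>i<n. f i)" by (intro sum_mono) auto
  with assms show False by simp
qed

lemma sum_eq_ex:
  fixes a b :: "nat \<Rightarrow> nat"
  assumes "a \<in> mons n" "b \<in> mons n" "a \<noteq> b" "(\<Sum>i<n. a i) = (\<Sum>i<n. b i)"
  shows "\<exists>i<n. a i < b i"
proof (rule ccontr)
  assume "\<not> ?thesis"
  hence lt: "\<And>i. i < n \<Longrightarrow> b i \<le> a i" using not_less by blast
  have le: "b \<le> a" unfolding le_fun_def
  proof
    fix i show "b i \<le> a i" using assms(2) lt by (cases "i < n") (auto simp: mons_def)
  qed
  have "(\<Sum>i<n. b i) < (\<Sum>i<n. a i)" using mons_sum_less[OF assms(2,1) le] assms(3) by auto
  with assms(4) show False by simp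
qed

locale mp =
  fixes n :: nat and I :: "(nat \<Rightarrow> nat) set"
  assumes mprim: "m_primary n I"
begin

abbreviation "D \<equiv> dI I"

lemma I_mons: "I \<subseteq> mons n" using mprim by (simp add: m_primary_def mono_ideal_def)
lemma I_up: "a \<in> I \<Longrightarrow> b \<in> mons n \<Longrightarrow> a \<le> b \<Longrightarrow> b \<in> I"
  using mprim by (auto simp: m_primary_def mono_ideal_def)

lemma zero_notin: "(\<lambda>_. 0::nat) \<notin> I"
proof
  assume "(\<lambda>_. 0::nat) \<in> I"
  hence "(\<lambda>_. 0::nat) \<in> rad n I" by (auto simp: rad_def mons_def intro!: exI[of _ 1])
  hence "(\<lambda>_. 0::nat) \<in> max_ideal n" using mprim by (simp add: m_primary_def)
  then obtain g where g: "g \<in> {(\<lambda>j. if j = i then 1 else 0) | i. i < n}" "g \<le> (\<lambda>_. 0::nat)"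
    unfolding max_ideal_def mem_gen by blast
  then obtain i where "g = (\<lambda>j. if j = i then 1 else 0)" by blast
  have "g i = 1" using \<open>g = _\<close> by simp
  moreover have "g i \<le> 0" using g(2) by (simp add: le_fun_def)
  ultimately show False by simp
qed

lemma xpow_mons: "i < n \<Longrightarrow> xpow i d \<in> mons n" by (simp add: xpow_def mons_def)

lemma D_ex: assumes "i < n" shows "1 \<le> D i \<and> xpow i (D i) \<in> gens I"
proof -
  have "xpow i 1 \<in> {(\<lambda>j. if j = i then 1 else 0) | i. i < n}"
    unfolding xpow_def using assms by blast
  hence "xpow i 1 \<in> max_ideal n" unfolding max_ideal_def mem_gen using xpow_mons[OF assms] by blast
  hence "xpow i 1 \<in> rad n I" using mprim by (simp add: m_primary_def)
  then obtain k where k: "k \<ge> 1" "(\<lambda>j. k * xpow i 1 j) \<in> I" unfolding rad_def by blast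
  have "(\<lambda>j. k * xpow i 1 j) = xpow i k" by (auto simp: xpow_def)
  with k have kI: "xpow i k \<in> I" by simp
  define d where "d = (LEAST d. xpow i d \<in> I)"
  have dI: "xpow i d \<in> I" unfolding d_def by (rule LeastI[of _ k]) (rule kI)
  have dmin: "\<And>e. xpow i e \<in> I \<Longrightarrow> d \<le> e" unfolding d_def by (rule Least_le)
  have x0: "xpow i 0 = (\<lambda>_. 0)" by (auto simp: xpow_def)
  have d1: "1 \<le> d"
  proof (rule ccontr)
    assume "\<not> 1 \<le> d" hence "d = 0" by simp
    with dI x0 zero_notin show False by simp
  qed
  have dg: "xpow i d \<in> gens I"
  proof -
    { fix b assume b: "b \<in> I" "b \<le> xpow i d"
      have bx: "xpow i (b i) = b"
      proof
        fix j show "xpow i (b i) j = b j" using b(2) by (auto simp: le_fun_def xpow_def dest: spec[of _ j])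
      qed
      have "b i \<le> d" using b(2) by (auto simp: le_fun_def xpow_def dest: spec[of _ i])
      moreover have "d \<le> b i"
      proof -
        have "xpow i (b i) \<in> I" using b(1) bx by simp
        thus ?thesis by (rule dmin)
      qed
      ultimately have "b i = d" by simp
      hence "b = xpow i d" using bx by simp }
    thus ?thesis using dI by (auto simp: gens_def)
  qed
  have uniq: "e = d" if e: "1 \<le> e \<and> xpow i e \<in> gens I" for e
  proof (cases "e \<le> d")
    case True
    hence "xpow i e \<le> xpow i d" by (auto simp: le_fun_def xpow_def)
    hence "xpow i e = xpow i d" using e dg by (auto simp: gens_def)
    hence "xpow i e i = xpow i d i" by simp
    thus ?thesis by (simp add: xpow_def)
  next
    case False
    hence "xpow i d \<le> xpow i e" by (auto simp: le_fun_def xpow_def)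
    hence "xpow i d = xpow i e" using e dg by (auto simp: gens_def)
    hence "xpow i e i = xpow i d i" by simp
    thus ?thesis by (simp add: xpow_def)
  qed
  have "D i = d" unfolding dI_def
    apply (rule the_equality)
    using d1 dg apply blast
    using uniq by blast
  thus ?thesis using d1 dg by simp
qed

lemma D_pos: "i < n \<Longrightarrow> 1 \<le> D i" using D_ex by blast
lemma xpow_I: "i < n \<Longrightarrow> xpow i (D i) \<in> I" using D_ex by (auto simp: gens_def)

lemma gens_eq: assumes "g \<in> gens I" "i < n" "D i \<le> g i" shows "g = xpow i (D i)"
proof -
  have "xpow i (D i) \<le> g" using assms(3) by (auto simp: le_fun_def xpow_def)
  moreover have "xpow i (D i) \<in> I" using xpow_I[OF assms(2)] .
  ultimately show ?thesis using assms(1) by (auto simp: gens_def)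
qed

lemma gens_le: assumes "g \<in> gens I" "i < n" shows "g i \<le> D i"
proof (rule ccontr)
  assume a: "\<not> g i \<le> D i"
  hence "g = xpow i (D i)" using gens_eq assms by simp
  hence "g i = D i" by (simp add: xpow_def)
  with a show False by simp
qed

lemma mem_J: "c \<in> gen_ideal n {xpow i (D i) | i. i < n} \<longleftrightarrow> c \<in> mons n \<and> (\<exists>i<n. \<forall>j. xpow i (D i) j \<le> c j)"
  by (auto simp: gen_ideal_def le_fun_def)

lemma ipow1: "ipow n I (Suc 0) = I"
proof
  show "ipow n I (Suc 0) \<subseteq> I"
  proof
    fix c assume "c \<in> ipow n I (Suc 0)"
    then obtain a b where "c \<in> mons n" "a \<in> I" "\<forall>i. a i + b i \<le> c i" by (auto simp: mem_prod)
    hence "a \<le> c" by (auto simp: le_fun_def intro: add_leD1)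
    thus "c \<in> I" using I_up \<open>a \<in> I\<close> \<open>c \<in> mons n\<close> by blast
  qed
  show "I \<subseteq> ipow n I (Suc 0)"
  proof
    fix c assume c: "c \<in> I"
    have "(\<lambda>_. 0) \<in> mons n" by (simp add: mons_def)
    hence "\<exists>b\<in>mons n. \<forall>i. c i + b i \<le> c i" by force
    hence "\<exists>a\<in>I. \<exists>b\<in>mons n. \<forall>i. a i + b i \<le> c i" using c by blast
    thus "c \<in> ipow n I (Suc 0)" using c I_mons unfolding ipow.simps mem_prod by blast
  qed
qed

lemma ipow2: "ipow n I 2 = prod_ideal n I I" unfolding numeral_2_eq_2 ipow.simps(2)[of n I "Suc 0"] ipow1 ..

end


context mp
begin

lemma lemA:
  assumes E: "ipow n I 2 = prod_ideal n I (gen_ideal n {xpow i (D i) | i. i < n})"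
  shows "c \<in> ipow n I (Suc k) \<longleftrightarrow> c \<in> mons n \<and>
    (\<exists>g\<in>I. \<exists>b\<in>mons n. (\<Sum>i<n. b i) = k \<and> (\<forall>i. g i + b i * D i \<le> c i))"
proof (induction k arbitrary: c)
  case 0
  show ?case
  proof
    assume "c \<in> ipow n I (Suc 0)"
    hence c: "c \<in> I" by (simp only: ipow1)
    have z: "(\<lambda>_. 0) \<in> mons n" by (simp add: mons_def)
    have "\<forall>i. c i + (\<lambda>_. 0::nat) i * D i \<le> c i" by simp
    moreover have "(\<Sum>i<n. (\<lambda>_. 0::nat) i) = 0" by simp
    ultimately show "c \<in> mons n \<and> (\<exists>g\<in>I. \<exists>b\<in>mons n. (\<Sum>i<n. b i) = 0 \<and> (\<forall>i. g i + b i * D i \<le> c i))"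
      using c z I_mons by blast
  next
    assume "c \<in> mons n \<and> (\<exists>g\<in>I. \<exists>b\<in>mons n. (\<Sum>i<n. b i) = 0 \<and> (\<forall>i. g i + b i * D i \<le> c i))"
    then obtain g b where c: "c \<in> mons n" and g: "g \<in> I" and gb: "\<forall>i. g i + b i * D i \<le> c i" by blast
    have "g \<le> c" unfolding le_fun_def
    proof
      fix i show "g i \<le> c i" using gb[rule_format, of i] by linarith
    qed
    hence "c \<in> I" using I_up g c by blast
    thus "c \<in> ipow n I (Suc 0)" by (simp only: ipow1)
  qed
next
  case (Suc k)
  show ?case
  proof
    assume "c \<in> ipow n I (Suc (Suc k))"
    hence "c \<in> prod_ideal n I (ipow n I (Suc k))" by (simp only: ipow.simps)
    then obtain x y where c: "c \<in> mons n" and x: "x \<in> I" and y: "y \<in> ipow n I (Suc k)"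
      and xy: "\<forall>i. x i + y i \<le> c i" unfolding mem_prod by blast
    from y Suc.IH obtain g b where g: "g \<in> I" and b: "b \<in> mons n" "(\<Sum>i<n. b i) = k"
      and gb: "\<forall>i. g i + b i * D i \<le> y i" by blast
    have xm: "x \<in> mons n" and gm: "g \<in> mons n" using x g I_mons by auto
    have "(\<lambda>i. x i + g i) \<in> mons n" using xm gm by (simp add: mons_def)
    hence "(\<lambda>i. x i + g i) \<in> prod_ideal n I I" using x g unfolding mem_prod by fastforce
    hence "(\<lambda>i. x i + g i) \<in> prod_ideal n I (gen_ideal n {xpow i (D i) | i. i < n})"
      using E ipow2 by simp
    then obtain g' w where g': "g' \<in> I" and w: "w \<in> gen_ideal n {xpow i (D i) | i. i < n}"
      and gw: "\<forall>i. g' i + w i \<le> x i + g i" unfolding mem_prod by auto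
    from w obtain j where j: "j < n" "\<forall>i. xpow j (D j) i \<le> w i" unfolding mem_J by blast
    define b' where "b' = (\<lambda>i. b i + (if i = j then 1 else 0::nat))"
    have "b' \<in> mons n" using b j by (auto simp: b'_def mons_def)
    moreover have "(\<Sum>i<n. b' i) = Suc k" using b j by (simp add: b'_def sum.distrib)
    moreover have "\<forall>i. g' i + b' i * D i \<le> c i"
    proof
      fix i
      have h1: "g' i + w i \<le> x i + g i" using gw by blast
      have h2: "xpow j (D j) i \<le> w i" using j by blast
      have h3: "g i + b i * D i \<le> y i" using gb by blast
      have h4: "x i + y i \<le> c i" using xy by blast
      show "g' i + b' i * D i \<le> c i"
      proof (cases "i = j")
        case True
        hence "b' i * D i = b i * D i + D i" by (simp add: b'_def)
        moreover have "D i \<le> w i" using h2 True by (simp add: xpow_def)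
        ultimately show ?thesis using h1 h3 h4 by linarith
      next
        case False
        hence "b' i * D i = b i * D i" by (simp add: b'_def)
        thus ?thesis using h1 h3 h4 by linarith
      qed
    qed
    ultimately show "c \<in> mons n \<and> (\<exists>g\<in>I. \<exists>b\<in>mons n. (\<Sum>i<n. b i) = Suc k \<and> (\<forall>i. g i + b i * D i \<le> c i))"
      using c g' by blast
  next
    assume "c \<in> mons n \<and> (\<exists>g\<in>I. \<exists>b\<in>mons n. (\<Sum>i<n. b i) = Suc k \<and> (\<forall>i. g i + b i * D i \<le> c i))"
    then obtain g b where c: "c \<in> mons n" and g: "g \<in> I" and b: "b \<in> mons n" "(\<Sum>i<n. b i) = Suc k"
      and gb: "\<forall>i. g i + b i * D i \<le> c i" by blast
    obtain j where j: "j < n" "0 < b j"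
    proof -
      have "(\<Sum>i<n. (0::nat)) < (\<Sum>i<n. b i)" using b(2) by simp
      from sum_gt_ex[OF this] show ?thesis using that by blast
    qed
    define b' where "b' = (\<lambda>i. if i = j then b j - 1 else b i)"
    have bb: "\<And>i. b i = b' i + (if i = j then 1 else 0)" using j by (auto simp: b'_def)
    have b'm: "b' \<in> mons n" using b j by (auto simp: b'_def mons_def)
    have "(\<Sum>i<n. b i) = (\<Sum>i<n. b' i + (if i = j then 1 else 0))" using bb by presburger
    also have "\<dots> = (\<Sum>i<n. b' i) + 1" using j by (simp add: sum.distrib)
    finally have sb': "(\<Sum>i<n. b' i) = k" using b(2) by simp
    have gm: "g \<in> mons n" using g I_mons by auto
    have ym: "(\<lambda>i. g i + b' i * D i) \<in> mons n" using gm b'm by (simp add: mons_def)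
    have "\<forall>i. g i + b' i * D i \<le> g i + b' i * D i" by simp
    hence yI: "(\<lambda>i. g i + b' i * D i) \<in> ipow n I (Suc k)" using Suc.IH ym g b'm sb' by blast
    have xI: "xpow j (D j) \<in> I" using xpow_I j by blast
    have hxy: "\<forall>i. xpow j (D j) i + (g i + b' i * D i) \<le> c i"
    proof
      fix i
      have h: "g i + b i * D i \<le> c i" using gb by blast
      show "xpow j (D j) i + (g i + b' i * D i) \<le> c i"
      proof (cases "i = j")
        case True
        hence "b i * D i = b' i * D i + D i" using bb[of i] by simp
        thus ?thesis using h True by (simp add: xpow_def)
      next
        case False
        hence e: "b i * D i = b' i * D i" using bb[of i] by simp
        have "xpow j (D j) i = 0" using False by (simp add: xpow_def)
        thus ?thesis using h e by linarith
      qed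
    qed
    have "\<exists>y\<in>ipow n I (Suc k). \<forall>i. xpow j (D j) i + y i \<le> c i"
      using hxy yI by (rule_tac x="\<lambda>i. g i + b' i * D i" in bexI) auto
    hence "c \<in> prod_ideal n I (ipow n I (Suc k))" using c xI unfolding mem_prod by blast
    thus "c \<in> ipow n I (Suc (Suc k))" by (simp only: ipow.simps)
  qed
qed

end


context mp
begin

lemma lemM:
  assumes g': "g' \<in> I" and g0: "g0 \<in> gens I" and a: "a \<in> mons n" and b: "b \<in> mons n"
    and s: "(\<Sum>i<n. a i) = (\<Sum>i<n. b i)"
    and le: "\<forall>i. g' i + b i * D i \<le> g0 i + a i * D i"
  shows "\<forall>i. g' i + b i * D i = g0 i + a i * D i"
proof (cases "a = b")
  case True
  have "g' \<le> g0" unfolding le_fun_def using le True by simp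
  hence "g' = g0" using g' g0 by (auto simp: gens_def)
  thus ?thesis using True by simp
next
  case False
  obtain i where i: "i < n" "a i < b i" using sum_eq_ex[OF a b False s] by blast
  have "(a i + 1) * D i \<le> b i * D i" using i(2) by (intro mult_le_mono1) simp
  moreover have "g' i + b i * D i \<le> g0 i + a i * D i" using le by blast
  ultimately have "D i \<le> g0 i" by (simp add: algebra_simps)
  hence g0x: "g0 = xpow i (D i)" using gens_eq g0 i(1) by blast
  define c where "c = (\<lambda>j. a j + (if j = i then 1 else 0::nat))"
  have cD: "g0 j + a j * D j = c j * D j" for j by (simp add: g0x c_def xpow_def)
  have bc: "b j \<le> c j" for j
  proof (cases "j < n")
    case False thus ?thesis using b by (simp add: mons_def)
  next
    case True
    show ?thesis
    proof (rule ccontr)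
      assume "\<not> b j \<le> c j"
      hence "(c j + 1) * D j \<le> b j * D j" by (intro mult_le_mono1) simp
      moreover have "1 \<le> D j" using D_pos True .
      moreover have "g' j + b j * D j \<le> c j * D j" using le[rule_format, of j] cD[of j] by simp
      ultimately show False by (simp add: algebra_simps)
    qed
  qed
  define f where "f = (\<lambda>j. c j - b j)"
  have cbf: "c j = b j + f j" for j using bc[of j] by (simp add: f_def)
  have "(\<Sum>j<n. c j) = (\<Sum>j<n. a j) + 1" using i(1) by (simp add: c_def sum.distrib)
  moreover have "(\<Sum>j<n. c j) = (\<Sum>j<n. b j) + (\<Sum>j<n. f j)" by (simp add: cbf sum.distrib)
  ultimately have sf: "(\<Sum>j<n. f j) = 1" using s by simp
  obtain k where k: "k < n" "0 < f k" using sum_gt_ex[where n=n and f="\<lambda>_. 0" and g=f] sf by auto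
  have "f k \<le> (\<Sum>j<n. f j)" using k(1) by (intro member_le_sum) auto
  hence fk: "f k = 1" using sf k(2) by simp
  have fo: "f j = 0" if jk: "j \<noteq> k" for j
  proof (cases "j < n")
    case False
    hence "a j = 0" "b j = 0" "j \<noteq> i" using a b i(1) by (auto simp: mons_def)
    thus ?thesis by (simp add: f_def c_def)
  next
    case True
    have "f j + f k = (\<Sum>x\<in>{j,k}. f x)" using jk by simp
    also have "\<dots> \<le> (\<Sum>x<n. f x)" using True k(1) by (intro sum_mono2) auto
    finally show ?thesis using sf fk by simp
  qed
  have "g' \<le> xpow k (D k)" unfolding le_fun_def
  proof
    fix j
    have h: "g' j + b j * D j \<le> c j * D j" using le[rule_format, of j] cD[of j] by simp
    show "g' j \<le> xpow k (D k) j"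
    proof (cases "j = k")
      case True
      hence "c j * D j = b j * D j + D j" using cbf[of j] fk by simp
      thus ?thesis using h True by (simp add: xpow_def)
    next
      case False
      hence e: "c j * D j = b j * D j" using cbf[of j] fo[OF False] by simp
      have "xpow k (D k) j = 0" using False by (simp add: xpow_def)
      thus ?thesis using h e by linarith
    qed
  qed
  hence g'x: "g' = xpow k (D k)" using g' D_ex[OF k(1)] by (auto simp: gens_def)
  show ?thesis
  proof
    fix j
    show "g' j + b j * D j = g0 j + a j * D j"
    proof (cases "j = k")
      case True
      hence "c j * D j = b j * D j + D j" using cbf[of j] fk by simp
      thus ?thesis using True g'x cD[of j] by (simp add: xpow_def)
    next
      case False
      hence e: "c j * D j = b j * D j" using cbf[of j] fo[OF False] by simp
      have "g' j = 0" using False g'x by (simp add: xpow_def)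
      thus ?thesis using e cD[of j] by linarith
    qed
  qed
qed

lemma lemG:
  assumes E: "ipow n I 2 = prod_ideal n I (gen_ideal n {xpow i (D i) | i. i < n})"
    and m: "m \<in> gens (ipow n I (Suc k))"
  shows "\<exists>g0\<in>gens I. \<exists>b\<in>mons n. (\<Sum>i<n. b i) = k \<and> m = (\<lambda>i. g0 i + b i * D i)"
proof -
  have mI: "m \<in> ipow n I (Suc k)" using m by (simp add: gens_def)
  then obtain g b where mm: "m \<in> mons n" and g: "g \<in> I" and b: "b \<in> mons n" "(\<Sum>i<n. b i) = k"
    and gb: "\<forall>i. g i + b i * D i \<le> m i" using lemA[OF E] by blast
  obtain g0 where g0: "g0 \<in> gens I" "g0 \<le> g" using wf_gens[OF I_mons g] by blast
  have g0I: "g0 \<in> I" using g0 by (simp add: gens_def)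
  have g0m: "g0 \<in> mons n" using g0I I_mons by blast
  have hm: "(\<lambda>i. g0 i + b i * D i) \<in> mons n" using g0m b by (simp add: mons_def)
  have "\<exists>g\<in>I. \<exists>b'\<in>mons n. (\<Sum>i<n. b' i) = k \<and> (\<forall>i. g i + b' i * D i \<le> g0 i + b i * D i)"
    using g0I b by blast
  hence hI: "(\<lambda>i. g0 i + b i * D i) \<in> ipow n I (Suc k)" using lemA[OF E] hm by simp
  have "(\<lambda>i. g0 i + b i * D i) \<le> m" unfolding le_fun_def
  proof
    fix i
    have "g0 i \<le> g i" using g0(2) by (simp add: le_fun_def)
    thus "g0 i + b i * D i \<le> m i" using gb[rule_format, of i] by linarith
  qed
  hence "(\<lambda>i. g0 i + b i * D i) = m" using m hI by (auto simp: gens_def)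
  thus ?thesis using g0(1) b by metis
qed

lemma good_of_E:
  assumes E: "ipow n I 2 = prod_ideal n I (gen_ideal n {xpow i (D i) | i. i < n})"
  shows "good n I"
  unfolding good_def
proof (intro conjI allI impI ballI)
  show "m_primary n I" by (rule mprim)
  fix l m assume l: "1 \<le> l" and m: "m \<in> gens (ipow n I l)"
  obtain k where lk: "l = Suc k" using l by (cases l) auto
  from lemG[OF E] m lk obtain g0 b where g0: "g0 \<in> gens I" and b: "b \<in> mons n" "(\<Sum>i<n. b i) = k"
    and mb: "m = (\<lambda>i. g0 i + b i * D i)" by blast
  have g0m: "g0 \<in> mons n" using g0 I_mons by (auto simp: gens_def)
  have "m \<in> box n I b" unfolding box_def
  proof (intro CollectI conjI allI impI)
    show "m \<in> mons n" using mb g0m b(1) by (simp add: mons_def)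
    fix i assume i: "i < n"
    show "b i * D i \<le> m i" using mb by simp
    show "m i \<le> (b i + 1) * D i" using mb gens_le[OF g0 i] by simp
  qed
  thus "\<exists>a\<in>mons n. (\<Sum>i<n. a i) = l - 1 \<and> m \<in> box n I a" using b lk by auto
qed

lemma sub_le:
  assumes E: "ipow n I 2 = prod_ideal n I (gen_ideal n {xpow i (D i) | i. i < n})"
    and a: "a \<in> mons n"
  shows "sub_ideal n I a \<subseteq> I"
proof
  fix x assume "x \<in> sub_ideal n I a"
  then obtain m where x: "x \<in> mons n" and mbox: "m \<in> box n I a"
    and mg: "m \<in> gens (ipow n I ((\<Sum>i<n. a i) + 1))" and le: "(\<lambda>i. m i - a i * D i) \<le> x"
    unfolding sub_ideal_def mem_gen by blast
  have "m \<in> gens (ipow n I (Suc (\<Sum>i<n. a i)))" using mg by simp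
  from lemG[OF E this] obtain g0 b where g0: "g0 \<in> gens I" and b: "b \<in> mons n" "(\<Sum>i<n. b i) = (\<Sum>i<n. a i)"
    and mb: "m = (\<lambda>i. g0 i + b i * D i)" by blast
  have g0I: "g0 \<in> I" using g0 by (simp add: gens_def)
  have g0m: "g0 \<in> mons n" using g0I I_mons by blast
  have "(\<lambda>i. m i - a i * D i) \<in> I"
  proof (cases "a = b")
    case True
    have "(\<lambda>i. m i - a i * D i) = g0" using mb True by auto
    thus ?thesis using g0I by simp
  next
    case False
    hence "b \<noteq> a" by simp
    obtain i where i: "i < n" "b i < a i" using sum_eq_ex[OF b(1) a \<open>b \<noteq> a\<close> b(2)] by blast
    have "a i * D i \<le> m i" using mbox i(1) by (simp add: box_def)
    moreover have "(b i + 1) * D i \<le> a i * D i" using i(2) by (intro mult_le_mono1) simp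
    moreover have "m i = g0 i + b i * D i" using mb by simp
    ultimately have "D i \<le> g0 i" by (simp add: algebra_simps)
    hence g0x: "g0 = xpow i (D i)" using gens_eq g0 i(1) by blast
    have "(\<Sum>j<n. a j) < (\<Sum>j<n. b j + (if j = i then 1 else 0))" using i(1) b(2) by (simp add: sum.distrib)
    from sum_gt_ex[OF this] obtain j where j: "j < n" "a j < b j + (if j = i then 1 else 0)" by blast
    have mj: "m j = (b j + (if j = i then 1 else 0)) * D j" using mb g0x by (simp add: xpow_def)
    have "(a j + 1) * D j \<le> (b j + (if j = i then 1 else 0)) * D j" using j(2) by (intro mult_le_mono1) simp
    hence "(a j + 1) * D j \<le> m j" using mj by simp
    hence "D j \<le> m j - a j * D j" by (simp add: algebra_simps)
    hence "xpow j (D j) \<le> (\<lambda>i. m i - a i * D i)" by (auto simp: le_fun_def xpow_def)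
    moreover have "(\<lambda>i. m i - a i * D i) \<in> mons n" using mb g0m b(1) by (simp add: mons_def)
    ultimately show ?thesis using I_up xpow_I j(1) by blast
  qed
  thus "x \<in> I" using I_up x le by blast
qed

lemma sub_ge:
  assumes E: "ipow n I 2 = prod_ideal n I (gen_ideal n {xpow i (D i) | i. i < n})"
    and a: "a \<in> mons n"
  shows "I \<subseteq> sub_ideal n I a"
proof
  fix x assume x: "x \<in> I"
  obtain g0 where g0: "g0 \<in> gens I" "g0 \<le> x" using wf_gens[OF I_mons x] by blast
  have g0I: "g0 \<in> I" using g0 by (simp add: gens_def)
  have g0m: "g0 \<in> mons n" using g0I I_mons by blast
  define m where "m = (\<lambda>i. g0 i + a i * D i)"
  have mm: "m \<in> mons n" using g0m a by (simp add: mons_def m_def)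
  have "\<exists>g\<in>I. \<exists>b'\<in>mons n. (\<Sum>i<n. b' i) = (\<Sum>i<n. a i) \<and> (\<forall>i. g i + b' i * D i \<le> m i)"
    using g0I a unfolding m_def by blast
  hence mI: "m \<in> ipow n I (Suc (\<Sum>i<n. a i))" using lemA[OF E] mm by simp
  have mg: "m \<in> gens (ipow n I (Suc (\<Sum>i<n. a i)))"
    unfolding gens_def
  proof (intro CollectI conjI ballI impI mI)
    fix h assume h: "h \<in> ipow n I (Suc (\<Sum>i<n. a i))" "h \<le> m"
    then obtain g' b where g': "g' \<in> I" "b \<in> mons n" "(\<Sum>i<n. b i) = (\<Sum>i<n. a i)"
      and gb: "\<forall>i. g' i + b i * D i \<le> h i" using lemA[OF E] by blast
    have hm: "\<forall>i. h i \<le> m i" using h(2) by (simp add: le_fun_def)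
    have "\<forall>i. g' i + b i * D i \<le> g0 i + a i * D i"
    proof
      fix i show "g' i + b i * D i \<le> g0 i + a i * D i"
        using gb[rule_format, of i] hm[rule_format, of i] by (simp add: m_def)
    qed
    from lemM[OF g'(1) g0(1) a g'(2) g'(3)[symmetric] this]
    have eq: "\<forall>i. g' i + b i * D i = m i" by (simp add: m_def)
    show "h = m"
    proof
      fix i show "h i = m i" using eq[rule_format, of i] gb[rule_format, of i] hm[rule_format, of i] by linarith
    qed
  qed
  have mb: "m \<in> box n I a" unfolding box_def
  proof (intro CollectI conjI allI impI mm)
    fix i assume i: "i < n"
    show "a i * D i \<le> m i" by (simp add: m_def)
    show "m i \<le> (a i + 1) * D i" using gens_le[OF g0(1) i] by (simp add: m_def)
  qed
  have "(\<lambda>i. m i - a i * D i) = g0" by (simp add: m_def)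
  hence "g0 \<in> {(\<lambda>i. m i - a i * D i) | m. m \<in> box n I a \<inter> gens (ipow n I ((\<Sum>i<n. a i) + 1))}"
    using mb mg by auto
  thus "x \<in> sub_ideal n I a" unfolding sub_ideal_def mem_gen using x I_mons g0(2) by blast
qed

lemma E_of_vg:
  assumes vg: "very_good n I"
  shows "ipow n I 2 = prod_ideal n I (gen_ideal n {xpow i (D i) | i. i < n})"
proof
  show "prod_ideal n I (gen_ideal n {xpow i (D i) | i. i < n}) \<subseteq> ipow n I 2"
  proof
    fix c assume "c \<in> prod_ideal n I (gen_ideal n {xpow i (D i) | i. i < n})"
    then obtain x w where c: "c \<in> mons n" "x \<in> I" "w \<in> gen_ideal n {xpow i (D i) | i. i < n}"
      "\<forall>i. x i + w i \<le> c i" unfolding mem_prod by blast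
    from c(3) obtain j where j: "j < n" "\<forall>i. xpow j (D j) i \<le> w i" "w \<in> mons n" unfolding mem_J by blast
    have "xpow j (D j) \<le> w" using j(2) by (simp add: le_fun_def)
    hence "w \<in> I" using I_up xpow_I[OF j(1)] j(3) by blast
    thus "c \<in> ipow n I 2" using c unfolding ipow2 mem_prod by blast
  qed
  show "ipow n I 2 \<subseteq> prod_ideal n I (gen_ideal n {xpow i (D i) | i. i < n})"
  proof
    fix c assume c: "c \<in> ipow n I 2"
    have sub: "ipow n I 2 \<subseteq> mons n" unfolding ipow2 by (auto simp: mem_prod)
    obtain m where m: "m \<in> gens (ipow n I 2)" "m \<le> c" using wf_gens[OF sub c] by blast
    from vg have good: "good n I" and sub_eq: "\<forall>a\<in>mons n. sub_ideal n I a = I"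
      by (auto simp: very_good_def)
    have "\<forall>l\<ge>1. \<forall>m\<in>gens (ipow n I l). \<exists>a\<in>mons n. (\<Sum>i<n. a i) = l - 1 \<and> m \<in> box n I a"
      using good by (simp add: good_def)
    hence "\<forall>m\<in>gens (ipow n I 2). \<exists>a\<in>mons n. (\<Sum>i<n. a i) = 2 - 1 \<and> m \<in> box n I a"
      by (metis one_le_numeral)
    with m(1) obtain a where a: "a \<in> mons n" "(\<Sum>i<n. a i) = 1" "m \<in> box n I a" by auto
    have mm: "m \<in> mons n" using m(1) sub by (auto simp: gens_def)
    have gm: "(\<lambda>i. m i - a i * D i) \<in> mons n" using mm by (simp add: mons_def)
    have "m \<in> gens (ipow n I ((\<Sum>i<n. a i) + 1))" using m(1) a(2) one_add_one by metis
    hence "(\<lambda>i. m i - a i * D i) \<in> {(\<lambda>i. m i - a i * D i) | m. m \<in> box n I a \<inter> gens (ipow n I ((\<Sum>i<n. a i) + 1))}"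
      using a(3) by blast
    hence "(\<lambda>i. m i - a i * D i) \<in> sub_ideal n I a" unfolding sub_ideal_def mem_gen using gm by blast
    hence xI: "(\<lambda>i. m i - a i * D i) \<in> I" using sub_eq a(1) by blast
    obtain j where j: "j < n" "0 < a j" using sum_gt_ex[where n=n and f="\<lambda>_. 0" and g=a] a(2) by auto
    have mj: "a j * D j \<le> m j" using a(3) j(1) by (simp add: box_def)
    have dj: "D j \<le> a j * D j" using j(2) by simp
    have "\<forall>i. (m i - a i * D i) + xpow j (D j) i \<le> c i"
    proof
      fix i
      have "m i \<le> c i" using m(2) by (simp add: le_fun_def)
      show "(m i - a i * D i) + xpow j (D j) i \<le> c i"
      proof (cases "i = j")
        case True
        hence "xpow j (D j) i = D i" by (simp add: xpow_def)
        moreover have "a i * D i \<le> m i" "D i \<le> a i * D i" using mj dj True by simp_all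
        ultimately show ?thesis using \<open>m i \<le> c i\<close> by arith
      next
        case False
        hence "xpow j (D j) i = 0" by (simp add: xpow_def)
        thus ?thesis using \<open>m i \<le> c i\<close> by arith
      qed
    qed
    moreover have "xpow j (D j) \<in> gen_ideal n {xpow i (D i) | i. i < n}"
      unfolding mem_J using xpow_mons[OF j(1)] j(1) by auto
    moreover have "c \<in> mons n" using c sub by blast
    ultimately show "c \<in> prod_ideal n I (gen_ideal n {xpow i (D i) | i. i < n})"
      unfolding mem_prod using xI
      apply (intro conjI)
       apply blast
      apply (rule bexI[of _ "\<lambda>i. m i - a i * D i"])
       apply (rule bexI[of _ "xpow j (D j)"])
      by auto
  qed
qed

end

theorem mainTheorem18:
  fixes n :: nat and I :: "(nat \<Rightarrow> nat) set"
  assumes "m_primary n I"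
  shows "very_good n I \<longleftrightarrow>
    ipow n I 2 = prod_ideal n I (gen_ideal n {xpow i (dI I i) | i. i < n})"
proof -
  interpret mp n I using assms by unfold_locales
  show ?thesis
  proof
    assume "very_good n I"
    thus "ipow n I 2 = prod_ideal n I (gen_ideal n {xpow i (dI I i) | i. i < n})" by (rule E_of_vg)
  next
    assume E: "ipow n I 2 = prod_ideal n I (gen_ideal n {xpow i (dI I i) | i. i < n})"
    show "very_good n I" unfolding very_good_def
      using good_of_E[OF E] sub_le[OF E] sub_ge[OF E] by blast
  qed
qed

end
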